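(* Let $\mathcal{H}$ be a Hilbert space and let $f,g$ be holomorphic mappings from $\mathbb{C}^n$ to $\mathcal{H}$. Put $r(z,\overline w)=\langle f(z),f(w)\rangle-\langle g(z),g(w)\rangle$. Then the inequality $r(z,\overline z)\,r(w,\overline w)\ge |r(z,\overline w)|^2$ holds for all $z,w\in\mathbb{C}^n$ if and only if for every pair of points $z,w\in\mathbb{C}^n$, $$\|f(z)\otimes g(w)-f(w)\otimes g(z)\|^2\le \|f(z)\|^2\|f(w)\|^2-|\langle f(z),f(w)\rangle|^2+\|g(z)\|^2\|g(w)\|^2-|\langle g(z),g(w)\rangle|^2,$$ where the norm on the left is that of the Hilbert space tensor product $\mathcal{H}\otimes\mathcal{H}$.
   Context: The inner product on $\mathcal{H}\otimes\mathcal{H}$ satisfies $\langle u_1\otimes v_1,u_2\otimes v_2\rangle=\langle u_1,u_2\rangle\langle v_1,v_2\rangle$. *)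

theory Defs
  imports "HOL-Analysis.Analysis"
begin

text \<open>Complex vector spaces, complex inner product spaces and complex Hilbert spaces.
  The inner product is linear in the first and conjugate-linear in the second argument.\<close>

class complex_vector = real_vector +
  fixes scaleC :: "complex \<Rightarrow> 'a \<Rightarrow> 'a"
  assumes scaleC_add_right: "scaleC a (x + y) = scaleC a x + scaleC a y"
    and scaleC_add_left: "scaleC (a + b) x = scaleC a x + scaleC b x"
    and scaleC_scaleC: "scaleC a (scaleC b x) = scaleC (a * b) x"
    and scaleC_one: "scaleC 1 x = x"
    and scaleR_scaleC: "scaleR r x = scaleC (complex_of_real r) x"

class complex_inner = complex_vector + real_normed_vector +
  fixes cinner :: "'a \<Rightarrow> 'a \<Rightarrow> complex"
  assumes cinner_commute: "cinner x y = cnj (cinner y x)"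
    and cinner_add_left: "cinner (x + y) z = cinner x z + cinner y z"
    and cinner_scaleC_left: "cinner (scaleC c x) y = c * cinner x y"
    and cinner_ge_zero: "0 \<le> Re (cinner x x)"
    and cinner_eq_zero_iff: "cinner x x = 0 \<longleftrightarrow> x = 0"
    and norm_eq_sqrt_cinner: "norm x = sqrt (Re (cinner x x))"

class chilbert_space = complex_inner + complete_space

definition holomorphic_map :: "(complex^'n \<Rightarrow> 'a::{complex_vector,real_normed_vector}) \<Rightarrow> bool" where
  "holomorphic_map f \<longleftrightarrow>
     (\<forall>z. \<exists>L. (f has_derivative L) (at z) \<and> (\<forall>c v. L (c *s v) = scaleC c (L v)))"

text \<open>A realisation of the Hilbert space tensor product \<open>H \<otimes> H\<close>: a bilinear map into a
  Hilbert space with \<open>\<langle>u1\<otimes>v1, u2\<otimes>v2\<rangle> = \<langle>u1,u2\<rangle>\<langle>v1,v2\<rangle>\<close>.\<close>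

definition is_tensor_map :: "('h::complex_inner \<Rightarrow> 'h \<Rightarrow> 't::complex_inner) \<Rightarrow> bool" where
  "is_tensor_map T \<longleftrightarrow>
     (\<forall>x y z. T (x + y) z = T x z + T y z) \<and>
     (\<forall>x y z. T x (y + z) = T x y + T x z) \<and>
     (\<forall>c x y. T (scaleC c x) y = scaleC c (T x y)) \<and>
     (\<forall>c x y. T x (scaleC c y) = scaleC c (T x y)) \<and>
     (\<forall>u1 v1 u2 v2. cinner (T u1 v1) (T u2 v2) = cinner u1 u2 * cinner v1 v2)"

end

theory Submission
  imports Defs
begin

lemma ci_minus_left: "cinner (x - y) (z::'a::complex_inner) = cinner x z - cinner y z"
  using cinner_add_left[of "x - y" y z] by simp

lemma ci_minus_right: "cinner (z::'a::complex_inner) (x - y) = cinner z x - cinner z y"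
  by (metis ci_minus_left cinner_commute complex_cnj_diff)

lemma ci_self_real: "Im (cinner (x::'a::complex_inner) x) = 0"
  using cinner_commute[of x x] by (metis Im_complex_div_lemma complex_cnj_cnj complex_mod_cnj
      cnj.sel(2) diff_0 mult_zero_left neg_equal_zero)

lemma norm_sq: "(norm (x::'a::complex_inner))\<^sup>2 = Re (cinner x x)"
  by (simp add: norm_eq_sqrt_cinner cinner_ge_zero)

lemma norm_diff_sq: "(norm ((x::'a::complex_inner) - y))\<^sup>2
   = Re (cinner x x) + Re (cinner y y) - 2 * Re (cinner x y)"
proof -
  have "Re (cinner y x) = Re (cinner x y)" using cinner_commute[of y x] by simp
  then show ?thesis by (simp add: norm_sq ci_minus_left ci_minus_right)
qed

lemma cmod_sq: "(cmod z)\<^sup>2 = (Re z)\<^sup>2 + (Im z)\<^sup>2"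
  by (simp add: cmod_def)

theorem proposition7p1:
  fixes f g :: "complex^'n \<Rightarrow> 'h::chilbert_space"
    and T :: "'h \<Rightarrow> 'h \<Rightarrow> 't::chilbert_space"
    and r :: "complex^'n \<Rightarrow> complex^'n \<Rightarrow> complex"
  assumes "holomorphic_map f" and "holomorphic_map g"
    and "is_tensor_map T"
    and r_def: "\<And>z w. r z w = cinner (f z) (f w) - cinner (g z) (g w)"
  shows "(\<forall>z w. Re (r z z) * Re (r w w) \<ge> (cmod (r z w))\<^sup>2) \<longleftrightarrow>
         (\<forall>z w. (norm (T (f z) (g w) - T (f w) (g z)))\<^sup>2 \<le>
                (norm (f z))\<^sup>2 * (norm (f w))\<^sup>2 - (cmod (cinner (f z) (f w)))\<^sup>2
              + (norm (g z))\<^sup>2 * (norm (g w))\<^sup>2 - (cmod (cinner (g z) (g w)))\<^sup>2)"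
proof -
  have TT: "\<And>u1 v1 u2 v2. cinner (T u1 v1) (T u2 v2) = cinner u1 u2 * cinner v1 v2"
    using assms(3) unfolding is_tensor_map_def by blast
  have key: "(Re (r z z) * Re (r w w) \<ge> (cmod (r z w))\<^sup>2) \<longleftrightarrow>
         ((norm (T (f z) (g w) - T (f w) (g z)))\<^sup>2 \<le>
                (norm (f z))\<^sup>2 * (norm (f w))\<^sup>2 - (cmod (cinner (f z) (f w)))\<^sup>2
              + (norm (g z))\<^sup>2 * (norm (g w))\<^sup>2 - (cmod (cinner (g z) (g w)))\<^sup>2)" for z w
  proof -
    define a where "a = f z"
    define b where "b = f w"
    define c where "c = g z"
    define d where "d = g w"
    have dc: "cinner d c = cnj (cinner c d)" by (rule cinner_commute)
    have ia: "Im (cinner a a) = 0" "Im (cinner b b) = 0" "Im (cinner c c) = 0" "Im (cinner d d) = 0"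
      by (simp_all add: ci_self_real)
    have "(norm (T a d - T b c))\<^sup>2 = Re (cinner a a * cinner d d) + Re (cinner b b * cinner c c)
        - 2 * Re (cinner a b * cinner d c)"
      by (simp add: norm_diff_sq TT)
    also have "\<dots> = Re (cinner a a) * Re (cinner d d) + Re (cinner b b) * Re (cinner c c)
        - 2 * (Re (cinner a b) * Re (cinner c d) + Im (cinner a b) * Im (cinner c d))"
      using ia dc by simp
    finally have n: "(norm (T a d - T b c))\<^sup>2 = Re (cinner a a) * Re (cinner d d) + Re (cinner b b) * Re (cinner c c)
        - 2 * (Re (cinner a b) * Re (cinner c d) + Im (cinner a b) * Im (cinner c d))" .
    show ?thesis
      unfolding r_def a_def[symmetric] b_def[symmetric] c_def[symmetric] d_def[symmetric] n
      by (simp only: norm_sq cmod_sq) (simp add: power2_eq_square algebra_simps)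
  qed
  show ?thesis using key by blast
qed

end
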